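(* For every $n$, the parking order $\le_P$ on parking functions of degree $n$ admits least upper bounds: for parking functions $f=(\sigma,s)$ and $g=(\tau,t)$ of degree $n$, the pair $(\sigma\vee\tau,\ s\vee t)$ is a parking function and it is the least upper bound $f\vee g$ in $\le_P$ (joins taken in the weak order and in the Tamari order respectively).
   Context: $\mathrm{PBT}_n$ is the set of planar binary trees (each internal node has exactly two children, left and right) with $n+1$ leaves, leaves numbered left to right; $\mathrm{Des}(t)=\{1\le i\le n-1:\text{the }(i+1)\text{-st leaf of }t\text{ is a right child}\}$. For $\sigma\in S_n$ (one-line notation), $\mathrm{Des}(\sigma)=\{i:\sigma(i)>\sigma(i+1)\}$ and $\mathrm{Inv}(\sigma)=\{(i,j):i<j,\sigma(i)>\sigma(j)\}$. A parking function of degree $n$ is a pair $(\sigma,t)\in S_n\times\mathrm{PBT}_n$ with $\mathrm{Des}(t)\subseteq\mathrm{Des}(\sigma)$. The (left) weak order: $\sigma\le_w\tau$ iff $\mathrm{Inv}(\sigma)\subseteq\mathrm{Inv}(\tau)$. The Tamari order $\le_T$ on $\mathrm{PBT}_n$ is the reflexive–transitive closure of $s\le t$ whenever $t$ is obtained from $s$ by replacing a subtree of the form $x(A,y(B,C))$ by $x(y(A,B),C)$ (left rotation). Both are lattices. The parking order: $(\sigma,s)\le_P(\tau,t)$ iff $\sigma\le_w\tau$ and $s\le_T t$. *)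

theory Defs
  imports "HOL-Combinatorics.Permutations"
begin

definition perm_des :: "nat \<Rightarrow> (nat \<Rightarrow> nat) \<Rightarrow> nat set" where
  "perm_des n \<sigma> = {i. 1 \<le> i \<and> i \<le> n - 1 \<and> \<sigma> i > \<sigma> (i + 1)}"

definition perm_inv :: "nat \<Rightarrow> (nat \<Rightarrow> nat) \<Rightarrow> (nat \<times> nat) set" where
  "perm_inv n \<sigma> = {(i, j). 1 \<le> i \<and> i < j \<and> j \<le> n \<and> \<sigma> i > \<sigma> j}"

definition weak_le :: "nat \<Rightarrow> (nat \<Rightarrow> nat) \<Rightarrow> (nat \<Rightarrow> nat) \<Rightarrow> bool" where
  "weak_le n \<sigma> \<tau> \<longleftrightarrow> perm_inv n \<sigma> \<subseteq> perm_inv n \<tau>"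

definition is_weak_join :: "nat \<Rightarrow> (nat \<Rightarrow> nat) \<Rightarrow> (nat \<Rightarrow> nat) \<Rightarrow> (nat \<Rightarrow> nat) \<Rightarrow> bool" where
  "is_weak_join n \<sigma> \<tau> u \<longleftrightarrow> u permutes {1..n} \<and> weak_le n \<sigma> u \<and> weak_le n \<tau> u \<and>
     (\<forall>v. v permutes {1..n} \<and> weak_le n \<sigma> v \<and> weak_le n \<tau> v \<longrightarrow> weak_le n u v)"

datatype pbt = Leaf | Node pbt pbt

fun leaves :: "pbt \<Rightarrow> nat" where
  "leaves Leaf = 1"
| "leaves (Node l r) = leaves l + leaves r"

text \<open>For each leaf, from left to right: is it a right child? (The root leaf of the
  one-leaf tree gets the flag given as argument; it is irrelevant for descents.)\<close>
fun leaf_is_right :: "bool \<Rightarrow> pbt \<Rightarrow> bool list" where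
  "leaf_is_right b Leaf = [b]"
| "leaf_is_right b (Node l r) = leaf_is_right False l @ leaf_is_right True r"

definition pbt_set :: "nat \<Rightarrow> pbt set" where
  "pbt_set n = {t. leaves t = n + 1}"

text \<open>Des(t): i in 1..n-1 such that the (i+1)-st leaf (list index i) is a right child.\<close>
definition tree_des :: "nat \<Rightarrow> pbt \<Rightarrow> nat set" where
  "tree_des n t = {i. 1 \<le> i \<and> i \<le> n - 1 \<and> leaf_is_right False t ! i}"

inductive rot :: "pbt \<Rightarrow> pbt \<Rightarrow> bool" where
  root: "rot (Node A (Node B C)) (Node (Node A B) C)"
| left: "rot l l' \<Longrightarrow> rot (Node l r) (Node l' r)"
| right: "rot r r' \<Longrightarrow> rot (Node l r) (Node l r')"

definition tamari_le :: "pbt \<Rightarrow> pbt \<Rightarrow> bool" where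
  "tamari_le = rot\<^sup>*\<^sup>*"

definition is_tamari_join :: "nat \<Rightarrow> pbt \<Rightarrow> pbt \<Rightarrow> pbt \<Rightarrow> bool" where
  "is_tamari_join n s t r \<longleftrightarrow> r \<in> pbt_set n \<and> tamari_le s r \<and> tamari_le t r \<and>
     (\<forall>w \<in> pbt_set n. tamari_le s w \<and> tamari_le t w \<longrightarrow> tamari_le r w)"

definition parking :: "nat \<Rightarrow> (nat \<Rightarrow> nat) \<times> pbt \<Rightarrow> bool" where
  "parking n p \<longleftrightarrow> fst p permutes {1..n} \<and> snd p \<in> pbt_set n \<and>
     tree_des n (snd p) \<subseteq> perm_des n (fst p)"

definition parking_le :: "nat \<Rightarrow> (nat \<Rightarrow> nat) \<times> pbt \<Rightarrow> (nat \<Rightarrow> nat) \<times> pbt \<Rightarrow> bool" where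
  "parking_le n p q \<longleftrightarrow> weak_le n (fst p) (fst q) \<and> tamari_le (snd p) (snd q)"

end

theory Submission
  imports Defs
begin

abbreviation lir where "lir \<equiv> leaf_is_right"

lemma len_lir[simp]: "length (lir b t) = leaves t"
  by (induction t arbitrary: b) auto

lemma leaves_pos: "leaves t \<ge> 1"
  by (induction t) auto

lemma leaves_nz[simp]: "leaves t \<noteq> 0"
  using leaves_pos[of t] by simp

lemma lir0: "lir False t ! 0 = False"
  by (induction t) (auto simp: nth_append leaves_pos)

lemma lir_node0[simp]: "lir b (Node l r) ! 0 = False"
  using lir0[of l] leaves_pos[of l] by (simp add: nth_append)

lemma lir_lastT: "lir True t ! (leaves t - 1)"
proof (induction t)
  case (Node l r)
  have "\<not> (leaves l + leaves r - 1 < leaves l)" using leaves_pos[of r] by arith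
  moreover have "leaves l + leaves r - 1 - leaves l = leaves r - 1" by simp
  ultimately show ?case using Node by (simp add: nth_append)
qed simp

lemma lir_node_last: "lir b (Node l r) ! (leaves (Node l r) - 1)"
proof -
  have "\<not> (leaves l + leaves r - 1 < leaves l)" using leaves_pos[of r] by arith
  moreover have "leaves l + leaves r - 1 - leaves l = leaves r - 1" by simp
  ultimately show ?thesis using lir_lastT[of r] by (simp add: nth_append)
qed

lemma lir_indep: "0 < i \<Longrightarrow> lir b t ! i = lir c t ! i"
  by (cases t) auto

lemma lir_FT: "list_all2 (\<longrightarrow>) (lir False t) (lir True t)"
  by (cases t) (auto intro: list_all2_refl)

lemma rot_mono: "rot a b \<Longrightarrow> list_all2 (\<longrightarrow>) (lir c a) (lir c b)"
proof (induction arbitrary: c rule: rot.induct)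
  case (root A B C)
  show ?case by (simp, intro list_all2_appendI list_all2_refl lir_FT) auto
next
  case (left l l' r) then show ?case by (auto intro: list_all2_appendI list_all2_refl)
next
  case (right r r' l) then show ?case by (auto intro: list_all2_appendI list_all2_refl)
qed

lemma tam_mono: "tamari_le a b \<Longrightarrow> list_all2 (\<longrightarrow>) (lir c a) (lir c b)"
  unfolding tamari_le_def
proof (induction rule: rtranclp_induct)
  case base then show ?case by (auto intro: list_all2_refl)
next
  case (step y z)
  show ?case
    by (rule list_all2_trans[OF _ step(3) rot_mono[OF step(2)]]) auto
qed

lemma tam_node: "tamari_le a a' \<Longrightarrow> tamari_le b b' \<Longrightarrow> tamari_le (Node a b) (Node a' b')"
proof -
  assume h1: "tamari_le a a'" and h2: "tamari_le b b'"
  have "rot\<^sup>*\<^sup>* (Node a b) (Node a' b)" using h1 unfolding tamari_le_def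
    by (induction rule: rtranclp_induct) (auto intro: rtranclp.rtrancl_into_rtrancl rot.left)
  moreover have "rot\<^sup>*\<^sup>* (Node a' b) (Node a' b')" using h2 unfolding tamari_le_def
    by (induction rule: rtranclp_induct) (auto intro: rtranclp.rtrancl_into_rtrancl rot.right)
  ultimately show ?thesis unfolding tamari_le_def by (rule rtranclp_trans)
qed

lemma tam_refl: "tamari_le a a" unfolding tamari_le_def by simp

lemma tam_trans: "tamari_le a b \<Longrightarrow> tamari_le b c \<Longrightarrow> tamari_le a c"
  unfolding tamari_le_def by (rule rtranclp_trans)

lemma tam_rot: "tamari_le (Node A (Node B C)) (Node (Node A B) C)"
  unfolding tamari_le_def by (auto intro: rot.root)

fun comb :: "nat \<Rightarrow> pbt" where
  "comb 0 = Leaf"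
| "comb (Suc 0) = Leaf"
| "comb (Suc (Suc k)) = Node Leaf (comb (Suc k))"

lemma comb_lir: "lir b (comb (Suc k)) = (if k = 0 then [b] else False # replicate (k - 1) False @ [True])"
  by (induction k arbitrary: b) (auto, case_tac k, auto)

lemma leaves_comb: "leaves (comb (Suc k)) = Suc k"
proof -
  have "length (lir False (comb (Suc k))) = Suc k" by (simp only: comb_lir) auto
  then show ?thesis by simp
qed

definition qsel :: "nat \<Rightarrow> nat set \<Rightarrow> nat" where
  "qsel m D = (if \<exists>j\<in>D. 1 \<le> j \<and> j \<le> m then Max (D \<inter> {1..m}) else 0)"

lemma qsel_le: "qsel m D \<le> m"
proof (cases "\<exists>j\<in>D. 1 \<le> j \<and> j \<le> m")
  case True
  then have "D \<inter> {1..m} \<noteq> {}" by auto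
  then have "Max (D \<inter> {1..m}) \<in> D \<inter> {1..m}" by (intro Max_in) auto
  then show ?thesis using True unfolding qsel_def by auto
next
  case False
  then have "qsel m D = 0" unfolding qsel_def by meson
  then show ?thesis by simp
qed

lemma qsel_ge: "j \<in> D \<Longrightarrow> 1 \<le> j \<Longrightarrow> j \<le> m \<Longrightarrow> j \<le> qsel m D"
  unfolding qsel_def by (auto intro: Max_ge)

lemma qsel_in: assumes "1 \<le> qsel m D" shows "qsel m D \<in> D"
proof (cases "\<exists>j\<in>D. 1 \<le> j \<and> j \<le> m")
  case True
  then have "D \<inter> {1..m} \<noteq> {}" by auto
  then have "Max (D \<inter> {1..m}) \<in> D \<inter> {1..m}" by (intro Max_in) auto
  then show ?thesis using True unfolding qsel_def by auto
next
  case False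
  then have "qsel m D = 0" unfolding qsel_def by meson
  then show ?thesis using assms by simp
qed

lemma qsel_eq:
  assumes "q \<le> m" "\<forall>j\<in>D. 1 \<le> j \<longrightarrow> j \<le> m \<longrightarrow> j \<le> q" "1 \<le> q \<longrightarrow> q \<in> D"
  shows "qsel m D = q"
proof (cases "1 \<le> q")
  case True
  then have "Max (D \<inter> {1..m}) = q" using assms by (intro Max_eqI) auto
  then show ?thesis using True assms unfolding qsel_def by auto
next
  case False
  then have "\<not>(\<exists>j\<in>D. 1 \<le> j \<and> j \<le> m)" using assms by fastforce
  then show ?thesis using False unfolding qsel_def by auto
qed

function Mt :: "nat \<Rightarrow> nat set \<Rightarrow> pbt" where
  "Mt 0 D = Leaf"
| "Mt (Suc m) D = Node (Mt (qsel m D) D) (comb (Suc m - qsel m D))"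
  by pat_completeness auto
termination by (relation "measure fst") (auto simp: le_imp_less_Suc qsel_le)

lemma lir_node_nth: "lir b (Node A B) ! i = (if i < leaves A then lir False A ! i else lir True B ! (i - leaves A))"
  by (simp add: nth_append)

lemma Mt_props: "leaves (Mt n D) = Suc n \<and> (\<forall>i. 1 \<le> i \<longrightarrow> i < n \<longrightarrow> lir False (Mt n D) ! i \<longrightarrow> i \<in> D)"
proof (induction n rule: less_induct)
  case (less n)
  show ?case
  proof (cases n)
    case 0 then show ?thesis by simp
  next
    case (Suc m)
    define q where "q = qsel m D"
    have qm: "q \<le> m" unfolding q_def by (rule qsel_le)
    have M: "Mt n D = Node (Mt q D) (comb (Suc (m - q)))" using Suc qm by (simp add: q_def Suc_diff_le)
    have IH: "leaves (Mt q D) = Suc q \<and> (\<forall>i. 1 \<le> i \<longrightarrow> i < q \<longrightarrow> lir False (Mt q D) ! i \<longrightarrow> i \<in> D)"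
      using less.IH[of q] Suc qm by simp
    have lv: "leaves (Mt n D) = Suc n" using M IH leaves_comb Suc qm by simp
    have "i \<in> D" if i: "1 \<le> i" "i < n" "lir False (Mt n D) ! i" for i
    proof -
      consider "i < q" | "i = q" | "i > q" by arith
      then show ?thesis
      proof cases
        case 1 then show ?thesis using i IH M by (simp add: nth_append)
      next
        case 2 then show ?thesis using i qsel_in[of m D] q_def by simp
      next
        case 3
        then have "lir True (comb (Suc (m - q))) ! (i - Suc q)" using i IH M by (simp add: nth_append)
        moreover have "lir True (comb (Suc (m - q))) ! (i - Suc q) = False"
        proof -
          have j: "i - Suc q < m - q" using 3 i Suc by simp
          then have m0: "m - q \<noteq> 0" by simp
          show ?thesis
          proof (cases "i - Suc q")
            case 0 then show ?thesis using m0 by (simp add: comb_lir)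
          next
            case (Suc j')
            then have "j' < m - Suc q" using j by simp
            then show ?thesis using m0 Suc by (simp add: comb_lir nth_append)
          qed
        qed
        ultimately show ?thesis by simp
      qed
    qed
    then show ?thesis using lv by blast
  qed
qed

lemma Mt_comb: "(\<forall>j\<in>D. 1 \<le> j \<longrightarrow> j < p \<longrightarrow> False) \<Longrightarrow> Mt p D = comb (Suc p)"
proof (cases p)
  case (Suc m)
  assume h: "\<forall>j\<in>D. 1 \<le> j \<longrightarrow> j < p \<longrightarrow> False"
  have "qsel m D = 0" using h Suc by (intro qsel_eq) auto
  then show ?thesis using Suc by (cases m) auto
qed simp

lemma leaves1: "leaves s = Suc 0 \<Longrightarrow> s = Leaf"
  by (cases s) (auto, metis add_is_1 leaves_nz)

lemma Mt_max: "leaves s = Suc n \<Longrightarrow> (\<forall>i. 1 \<le> i \<longrightarrow> i < n \<longrightarrow> lir False s ! i \<longrightarrow> i \<in> D) \<Longrightarrow> tamari_le s (Mt n D)"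
proof (induction n arbitrary: s D rule: less_induct)
  case (less n)
  show ?case
  proof (cases n)
    case 0
    then have "s = Leaf" using leaves1 less.prems(1) by simp
    then show ?thesis using 0 by (simp add: tam_refl)
  next
    case (Suc m)
    obtain A B where s: "s = Node A B" using less.prems(1) Suc by (cases s) auto
    define k where "k = leaves A"
    define q where "q = qsel m D"
    have qm: "q \<le> m" unfolding q_def by (rule qsel_le)
    have k1: "k \<ge> 1" unfolding k_def by (rule leaves_pos)
    have lB: "leaves B = Suc n - k" using less.prems(1) s k_def by simp
    have kn: "k \<le> n" using lB leaves_pos[of B] less.prems(1) s k_def by simp
    have fs1: "lir False s ! i = lir False A ! i" if "i < k" for i using that s k_def by (simp add: nth_append)
    have fs2: "lir False s ! (i + k) = lir True B ! i" for i using s k_def by (simp add: nth_append)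
    have qmax: "j \<le> q" if "j \<in> D" "1 \<le> j" "j \<le> m" for j using that qsel_ge q_def by simp
    have kq: "k \<le> q + 1"
    proof (cases "k \<ge> 2")
      case True
      then obtain A1 A2 where A: "A = Node A1 A2" using k_def by (cases A) auto
      have "lir False A ! (k - 1)" using lir_node_last[of False A1 A2] A k_def by simp
      then have "lir False s ! (k - 1)" using fs1[of "k-1"] k1 by simp
      then have "k - 1 \<in> D" using less.prems(2) True kn by auto
      moreover have "k - 1 \<le> m" using kn Suc by simp
      ultimately have "k - 1 \<le> q" using qmax[of "k-1"] True by simp
      then show ?thesis by simp
    qed simp
    define D' where "D' = {j. j + k \<in> D}"
    have B_le: "tamari_le B (Mt (n - k) D')"
    proof (rule less.IH)
      show "n - k < n" using k1 kn by simp
      show "leaves B = Suc (n - k)" using lB kn by simp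
      show "\<forall>i. 1 \<le> i \<longrightarrow> i < n - k \<longrightarrow> lir False B ! i \<longrightarrow> i \<in> D'"
      proof (intro allI impI)
        fix i assume i: "1 \<le> i" "i < n - k" "lir False B ! i"
        then have "lir False s ! (i + k)" using fs2 lir_indep[of i False B True] by simp
        then show "i \<in> D'" using less.prems(2) i D'_def by auto
      qed
    qed
    have M: "Mt n D = Node (Mt q D) (comb (n - q))" using Suc qm by (simp add: q_def)
    show ?thesis
    proof (cases "k = q + 1")
      case True
      have A_le: "tamari_le A (Mt q D)"
      proof (rule less.IH)
        show "q < n" using qm Suc by simp
        show "leaves A = Suc q" using True k_def by simp
        show "\<forall>i. 1 \<le> i \<longrightarrow> i < q \<longrightarrow> lir False A ! i \<longrightarrow> i \<in> D"
          using less.prems(2) fs1 True qm Suc by auto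
      qed
      have "Mt (n - k) D' = comb (Suc (n - k))"
      proof (rule Mt_comb, intro ballI impI)
        fix j assume jj: "j \<in> D'" "1 \<le> j" "j < n - k"
        then have "j + k \<le> m" "j + k \<in> D" using Suc D'_def by auto
        then have "j + k \<le> q" using qmax[of "j + k"] jj(2) by simp
        then show False using True jj by simp
      qed
      moreover have "n - q = Suc (n - k)" using True kn by simp
      ultimately have "comb (n - q) = Mt (n - k) D'" by simp
      then show ?thesis using tam_node[OF A_le B_le] s M by simp
    next
      case False
      then have kq': "k \<le> q" using kq by simp
      have q1: "q \<ge> 1" using kq' k1 by simp
      have qD: "q \<in> D" using qsel_in[of m D] q1 q_def by simp
      have qs: "qsel (m - k) D' = q - k"
      proof (rule qsel_eq)
        show "q - k \<le> m - k" using qm by simp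
        show "\<forall>j\<in>D'. 1 \<le> j \<longrightarrow> j \<le> m - k \<longrightarrow> j \<le> q - k"
          using qmax D'_def kq' qm by fastforce
        show "1 \<le> q - k \<longrightarrow> q - k \<in> D'" using qD kq' D'_def by simp
      qed
      define X where "X = Mt (q - k) D'"
      have nk: "n - k = Suc (m - k)" using Suc kq' qm by simp
      have MB: "Mt (n - k) D' = Node X (comb (n - q))"
        using nk qs X_def kq' qm Suc by simp
      have XP: "leaves X = Suc (q - k) \<and> (\<forall>i. 1 \<le> i \<longrightarrow> i < q - k \<longrightarrow> lir False X ! i \<longrightarrow> i \<in> D')"
        unfolding X_def by (rule Mt_props)
      have step1: "tamari_le s (Node (Node A X) (comb (n - q)))"
      proof -
        have "tamari_le s (Node A (Node X (comb (n - q))))"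
          using tam_node[OF tam_refl B_le] s MB by simp
        then show ?thesis using tam_trans tam_rot by blast
      qed
      have AX: "tamari_le (Node A X) (Mt q D)"
      proof (rule less.IH)
        show "q < n" using qm Suc by simp
        show "leaves (Node A X) = Suc q" using XP k_def kq' by simp
        show "\<forall>i. 1 \<le> i \<longrightarrow> i < q \<longrightarrow> lir False (Node A X) ! i \<longrightarrow> i \<in> D"
        proof (intro allI impI)
          fix i assume i: "1 \<le> i" "i < q" "lir False (Node A X) ! i"
          consider "i < k" | "i = k" | "i > k" by arith
          then show "i \<in> D"
          proof cases
            case 1 then show ?thesis using i fs1 less.prems(2) Suc qm k_def by (auto simp: nth_append)
          next
            case 2
            have "q - k \<ge> 1" using 2 i by simp
            then obtain X1 X2 where "X = Node X1 X2" unfolding X_def by (cases "q - k") auto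
            then show ?thesis using 2 i k_def lir0[of X1] leaves_pos[of X1] by (auto simp add: nth_append)
          next
            case 3
            then have "lir True X ! (i - k)" using i k_def by (simp add: nth_append)
            then have "lir False X ! (i - k)" using lir_indep[of "i - k" True X False] 3 by simp
            then have "i - k \<in> D'" using XP 3 i by auto
            then show ?thesis using D'_def 3 by simp
          qed
        qed
      qed
      show ?thesis using tam_trans[OF step1 tam_node[OF AX tam_refl]] M by simp
    qed
  qed
qed

lemma tree_des_mono: "tamari_le a b \<Longrightarrow> leaves a = Suc n \<Longrightarrow> tree_des n a \<subseteq> tree_des n b"
proof
  fix i assume ab: "tamari_le a b" and la: "leaves a = Suc n" and i: "i \<in> tree_des n a"
  have L: "list_all2 (\<longrightarrow>) (lir False a) (lir False b)" by (rule tam_mono[OF ab])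
  have "i < length (lir False a)" using i la unfolding tree_des_def by auto
  then have "lir False b ! i" using list_all2_nthD[OF L] i unfolding tree_des_def by auto
  then show "i \<in> tree_des n b" using i unfolding tree_des_def by auto
qed

lemma weak_des: "weak_le n \<sigma> u \<Longrightarrow> perm_des n \<sigma> \<subseteq> perm_des n u"
  unfolding weak_le_def perm_des_def perm_inv_def by auto

lemma Mt_in: "Mt n D \<in> pbt_set n" using Mt_props unfolding pbt_set_def by simp

lemma Mt_des: "tree_des n (Mt n D) \<subseteq> D"
  using Mt_props[of n D] unfolding tree_des_def by auto

lemma le_Mt: "s \<in> pbt_set n \<Longrightarrow> tree_des n s \<subseteq> D \<Longrightarrow> tamari_le s (Mt n D)"
  by (rule Mt_max) (auto simp: pbt_set_def tree_des_def)

theorem mainTheorem12: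
  fixes n :: nat and \<sigma> \<tau> u :: "nat \<Rightarrow> nat" and s t r :: pbt
  assumes "parking n (\<sigma>, s)" and "parking n (\<tau>, t)"
    and "is_weak_join n \<sigma> \<tau> u" and "is_tamari_join n s t r"
  shows "parking n (u, r) \<and> parking_le n (\<sigma>, s) (u, r) \<and> parking_le n (\<tau>, t) (u, r) \<and>
    (\<forall>q. parking n q \<and> parking_le n (\<sigma>, s) q \<and> parking_le n (\<tau>, t) q \<longrightarrow> parking_le n (u, r) q)"
proof -
  define D where "D = perm_des n u"
  have W: "u permutes {1..n}" "weak_le n \<sigma> u" "weak_le n \<tau> u"
    "\<And>v. v permutes {1..n} \<Longrightarrow> weak_le n \<sigma> v \<Longrightarrow> weak_le n \<tau> v \<Longrightarrow> weak_le n u v"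
    using assms(3) unfolding is_weak_join_def by auto
  have T: "r \<in> pbt_set n" "tamari_le s r" "tamari_le t r"
    "\<And>w. w \<in> pbt_set n \<Longrightarrow> tamari_le s w \<Longrightarrow> tamari_le t w \<Longrightarrow> tamari_le r w"
    using assms(4) unfolding is_tamari_join_def by auto
  have ps: "s \<in> pbt_set n" "tree_des n s \<subseteq> perm_des n \<sigma>" using assms(1) unfolding parking_def by auto
  have pt: "t \<in> pbt_set n" "tree_des n t \<subseteq> perm_des n \<tau>" using assms(2) unfolding parking_def by auto
  have "tree_des n s \<subseteq> D" using ps weak_des[OF W(2)] D_def by auto
  then have sM: "tamari_le s (Mt n D)" using le_Mt ps by blast
  have "tree_des n t \<subseteq> D" using pt weak_des[OF W(3)] D_def by auto
  then have tM: "tamari_le t (Mt n D)" using le_Mt pt by blast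
  have "tamari_le r (Mt n D)" using T(4)[OF Mt_in sM tM] .
  moreover have "leaves r = Suc n" using T(1) unfolding pbt_set_def by simp
  ultimately have "tree_des n r \<subseteq> tree_des n (Mt n D)" by (rule tree_des_mono)
  then have "tree_des n r \<subseteq> D" using Mt_des[of n D] by blast
  then have P: "parking n (u, r)" using W(1) T(1) D_def unfolding parking_def by simp
  show ?thesis
    using P W T unfolding parking_le_def parking_def by auto
qed

end
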